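(* Let $d\geq 2$. There exist $f_0,f_1\in\mathbb{F}_{2^d}$ such that $t^6+t^5+f_1t^4+f_0t^3+f_1t^2+t+1$ is irreducible over $\mathbb{F}_{2^d}$. *)

theory Defs
  imports "HOL-Computational_Algebra.Polynomial_Factorial"
begin

end

theory Submission
  imports Defs "HOL-Algebra.Algebraic_Closure_Type"
begin


hide_const (open) Divisibility.irreducible Divisibility.prime Polynomials.degree Polynomials.lead_coeff
  ring.monom Polynomials.var module.smult up_ring.monom up_ring.coeff


lemma fermat_finite_field:
  fixes a :: "'a::{field,finite}"
  shows "a ^ card (UNIV::'a set) = a"
proof (cases "a = 0")
  case True then show ?thesis by (simp add: finite_UNIV_card_ge_0 zero_power)
next
  case False
  define S where "S = (UNIV::'a set) - {0}"
  have fin: "finite S" by (simp add: S_def)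
  have inj: "inj_on ((*) a) S" using False by (auto simp: inj_on_def)
  have img: "(*) a ` S = S"
  proof
    show "(*) a ` S \<subseteq> S" using False by (auto simp: S_def)
    show "S \<subseteq> (*) a ` S"
    proof
      fix y assume "y \<in> S"
      then have "y = a * (y / a)" "y / a \<in> S" using False by (auto simp: S_def)
      then show "y \<in> (*) a ` S" by blast
    qed
  qed
  have "(\<Prod>y\<in>S. y) = (\<Prod>y\<in>(*) a ` S. y)" using img by simp
  also have "\<dots> = (\<Prod>y\<in>S. a * y)" using prod.reindex[OF inj] by simp
  also have "\<dots> = a ^ card S * (\<Prod>y\<in>S. y)" by (simp add: prod.distrib)
  finally have *: "(\<Prod>y\<in>S. y) = a ^ card S * (\<Prod>y\<in>S. y)" .
  have "(\<Prod>y\<in>S. y) \<noteq> 0" using fin by (simp add: S_def)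
  with * have "a ^ card S = 1" by simp
  moreover have "card S = card (UNIV::'a set) - 1" by (simp add: S_def card_Diff_singleton)
  moreover have "card (UNIV::'a set) > 0" by (simp add: finite_UNIV_card_ge_0)
  ultimately show ?thesis
    by (metis Suc_pred' mult.right_neutral power_Suc)
qed

lemma char2_of_card:
  fixes d :: nat
  assumes "d \<ge> 1" and "card (UNIV::'a::{field,finite} set) = 2 ^ d"
  shows "(1::'a) + 1 = 0"
proof -
  have "(-1::'a) ^ card (UNIV::'a set) = -1" by (rule fermat_finite_field)
  moreover have "even (card (UNIV::'a set))" using assms by simp
  ultimately have "(1::'a) = -1" by simp
  then show ?thesis by (metis add.right_inverse)
qed




lemma c2_double: assumes c2: "(1::'b::field) + 1 = 0" shows "(x::'b) + x = 0"
proof -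
  have "x + x = (1 + 1) * x" by (simp add: distrib_right)
  then show ?thesis using c2 by simp
qed

lemma c2_minus: assumes c2: "(1::'b::field) + 1 = 0" shows "- (x::'b) = x"
  using c2_double[OF c2, of x] by (metis add_eq_0_iff)

lemma c2_of_nat: assumes c2: "(1::'b::field) + 1 = 0" shows "(of_nat n::'b) = (if even n then 0 else 1)"
proof (induction n)
  case 0 then show ?case by simp
next
  case (Suc n) then show ?case using c2 by auto
qed

lemma c2_pow2_add: assumes c2: "(1::'b::field) + 1 = 0"
  shows "((x::'b) + y) ^ (2 ^ n) = x ^ (2 ^ n) + y ^ (2 ^ n)"
proof (induction n)
  case 0 then show ?case by simp
next
  case (Suc n)
  have sq: "(a + b) ^ 2 = a ^ 2 + b ^ 2" for a b :: 'b
  proof -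
    have "(a + b) ^ 2 = a ^ 2 + b ^ 2 + (a * b + a * b)" by (simp add: power2_eq_square algebra_simps)
    then show ?thesis using c2_double[OF c2, of "a*b"] by simp
  qed
  have "(x + y) ^ (2 ^ Suc n) = ((x + y) ^ (2 ^ n)) ^ 2" by (simp add: power_mult[symmetric] mult.commute)
  also have "\<dots> = (x ^ (2 ^ n)) ^ 2 + (y ^ (2 ^ n)) ^ 2" using Suc sq by simp
  also have "\<dots> = x ^ (2 ^ Suc n) + y ^ (2 ^ Suc n)" by (simp add: power_mult[symmetric] mult.commute)
  finally show ?case .
qed

lemma c2_pow2_sum: assumes c2: "(1::'b::field) + 1 = 0"
  shows "(sum (f::'i \<Rightarrow> 'b) A) ^ (2 ^ n) = (\<Sum>i\<in>A. f i ^ (2 ^ n))"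
proof (induction A rule: infinite_finite_induct)
  case (infinite A) then show ?case by simp
next
  case empty then show ?case by simp
next
  case (insert x F) then show ?case by (simp add: c2_pow2_add[OF c2])
qed

lemma c2_pow2_diff: assumes c2: "(1::'b::field) + 1 = 0"
  shows "((x::'b) - y) ^ (2 ^ n) = x ^ (2 ^ n) - y ^ (2 ^ n)"
proof -
  have e: "a - b = a + b" for a b :: 'b using c2_minus[OF c2, of b] by (metis diff_conv_add_uminus)
  show ?thesis unfolding e by (rule c2_pow2_add[OF c2])
qed

lemma c2_pow2_inj: assumes c2: "(1::'b::field) + 1 = 0"
  shows "((x::'b) ^ (2 ^ n) = y ^ (2 ^ n)) \<longleftrightarrow> x = y"
proof
  assume "x ^ 2 ^ n = y ^ 2 ^ n"
  then have "(x - y) ^ (2 ^ n) = 0" using c2_pow2_diff[OF c2] by simp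
  then show "x = y" by simp
qed simp




lemma card_roots_x_pow2:
  fixes n :: nat
  assumes c2: "(1::'b::alg_closed_field) + 1 = 0" and n: "n \<ge> 1"
  shows "card {x::'b. x ^ (2 ^ n) = x} = 2 ^ n" and "finite {x::'b. x ^ (2 ^ n) = x}"
proof -
  define p :: "'b poly" where "p = monom 1 (2 ^ n) - [:0, 1:]"
  have pp: "poly p x = x ^ (2 ^ n) - x" for x by (simp add: p_def poly_monom)
  have two_le: "2 \<le> (2::nat) ^ n" using n by (metis one_le_numeral power_increasing power_one_right)
  have deg: "degree p = 2 ^ n"
  proof -
    have "degree (- [:0, 1::'b:]) < degree (monom (1::'b) (2^n))"
      using two_le by (simp add: degree_monom_eq)
    then have "degree (monom (1::'b) (2^n) + - [:0, 1:]) = 2 ^ n"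
      by (subst degree_add_eq_left) (auto simp: degree_monom_eq)
    then show ?thesis unfolding p_def by (metis diff_conv_add_uminus)
  qed
  have p0: "p \<noteq> 0" using deg two_le by auto
  have roots: "{x. x ^ (2 ^ n) = x} = {x. poly p x = 0}" by (auto simp: pp)
  have fin: "finite {x. poly p x = 0}" using p0 by (rule poly_roots_finite)
  then show "finite {x::'b. x ^ (2 ^ n) = x}" using roots by simp
  have "of_nat (2 ^ n) = (0::'b)" using c2_of_nat[OF c2, of "2^n"] n by simp
  then have dp: "pderiv p = - 1" using n by (simp add: p_def pderiv_diff pderiv_monom pderiv_pCons zero_power one_pCons)
  obtain A where A: "size A = degree p" "p = smult (lead_coeff p) (\<Prod>x\<in>#A. [:-x, 1:])"
    using alg_closed_imp_factorization[OF p0] by blast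
  have cnt: "count A x \<le> 1" for x
  proof (rule ccontr)
    assume "\<not> count A x \<le> 1"
    then have "{#x, x#} \<subseteq># A" by (simp add: subseteq_mset_def)
    then have "image_mset (\<lambda>x. [:-x, 1:]) {#x, x#} \<subseteq># image_mset (\<lambda>x. [:-x, 1:]) A"
      by (rule image_mset_subseteq_mono)
    then have "(\<Prod>y\<in>#{#x, x#}. [:-y, 1:]) dvd (\<Prod>y\<in>#A. [:-y, 1:])"
      by (rule prod_mset_subset_imp_dvd)
    then have "[:-x, 1:] ^ 2 dvd (\<Prod>y\<in>#A. [:-y, 1:])" by (simp add: power2_eq_square)
    then have "[:-x, 1:] ^ 2 dvd p" using A(2) by (metis dvd_smult)
    then obtain h where "p = [:-x, 1:] ^ 2 * h" by (elim dvdE)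
    then have h: "p = [:-x, 1:] * ([:-x, 1:] * h)" by (simp only: power2_eq_square mult.assoc)
    have "poly (pderiv p) x = 0" unfolding h
      by (simp only: pderiv_mult poly_add poly_mult) simp
    then show False using dp by simp
  qed
  have "A = mset_set (set_mset A)"
  proof (rule multiset_eqI)
    fix a
    show "count A a = count (mset_set (set_mset A)) a"
      using cnt[of a] by (cases "a \<in># A") (auto simp: count_mset_set le_Suc_eq count_eq_zero_iff)
  qed
  then have "size A = card (set_mset A)" by (metis size_mset_set)
  moreover have "set_mset A \<subseteq> {x. poly p x = 0}"
  proof
    fix x assume "x \<in> set_mset A"
    then have "[:-x, 1:] dvd (\<Prod>y\<in>#A. [:-y, 1:])" by (simp add: dvd_prod_mset)
    then have "[:-x, 1:] dvd p" using A(2) by (metis dvd_smult)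
    then show "x \<in> {x. poly p x = 0}" by (simp add: poly_eq_0_iff_dvd)
  qed
  ultimately have "2 ^ n \<le> card {x. poly p x = 0}" using A(1) deg fin by (metis card_mono)
  moreover have "card {x. poly p x = 0} \<le> 2 ^ n" using card_poly_roots_bound[OF p0] deg by simp
  ultimately show "card {x::'b. x ^ (2 ^ n) = x} = 2 ^ n" using roots by simp
qed




definition tr :: "nat \<Rightarrow> 'b::field \<Rightarrow> 'b" where
  "tr d x = x + x ^ (2 ^ d) + x ^ (2 ^ (2 * d))"

definition T2 :: "nat \<Rightarrow> 'b::field \<Rightarrow> 'b" where
  "T2 d x = (\<Sum>k<d. x ^ (2 ^ k))"

lemma pow_pow2: "((x::'b::field) ^ (2 ^ a)) ^ (2 ^ b) = x ^ (2 ^ (a + b))"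
  by (simp add: power_mult[symmetric] power_add)
lemma pow_pow2_fix:
  assumes "(x::'b::field) ^ (2 ^ n) = x"
  shows "x ^ (2 ^ (n * k)) = x"
proof (induction k)
  case 0 then show ?case by simp
next
  case (Suc k)
  have "x ^ (2 ^ (n * Suc k)) = (x ^ (2 ^ (n * k))) ^ (2 ^ n)"
    by (simp add: pow_pow2 add.commute)
  then show ?case using Suc assms by simp
qed


context
  fixes d :: nat
  assumes c2: "(1::'b::field) + 1 = 0"
begin

lemma tr_add: "tr d ((x::'b) + y) = tr d x + tr d y"
  by (simp add: tr_def c2_pow2_add[OF c2] algebra_simps)

lemma tr_pow2: "tr d ((x::'b) ^ (2 ^ n)) = (tr d x) ^ (2 ^ n)"
  by (simp add: tr_def c2_pow2_add[OF c2] pow_pow2 add.commute)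


lemma tr_sq: "tr d ((x::'b) ^ 2) = (tr d x) ^ 2"
  using tr_pow2[of x 1] by simp

lemma tr_scale: assumes "(c::'b) ^ (2 ^ d) = c" shows "tr d (c * x) = c * tr d x"
proof -
  have "c ^ (2 ^ (2 * d)) = c" using pow_pow2_fix[OF assms, of 2] by (simp add: mult.commute)
  then show ?thesis using assms by (simp add: tr_def power_mult_distrib algebra_simps)
qed

lemma tr_fixed: assumes "(x::'b) ^ (2 ^ (3 * d)) = x" shows "(tr d x) ^ (2 ^ d) = tr d x"
proof -
  have "(tr d x) ^ (2 ^ d) = x ^ (2 ^ d) + x ^ (2 ^ (2 * d)) + x ^ (2 ^ (3 * d))"
  proof -
    have e1: "(x ^ (2 ^ d)) ^ (2 ^ d) = x ^ (2 ^ (2 * d))" by (simp add: pow_pow2 mult_2)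
    have e2: "(x ^ (2 ^ (2 * d))) ^ (2 ^ d) = x ^ (2 ^ (3 * d))" by (simp add: pow_pow2 numeral_3_eq_3)
    show ?thesis by (simp only: tr_def c2_pow2_add[OF c2] e1 e2)
  qed
  then show ?thesis using assms by (simp add: tr_def algebra_simps)
qed

lemma tr_frob: assumes "(x::'b) ^ (2 ^ (3 * d)) = x" shows "tr d (x ^ (2 ^ d)) = tr d x"
  using tr_pow2[of x d] tr_fixed[OF assms] by simp


lemma T2_add: "T2 d ((x::'b) + y) = T2 d x + T2 d y"
  by (simp add: T2_def c2_pow2_add[OF c2] sum.distrib)

lemma T2_0: "T2 d (0::'b) = 0"
  by (simp add: T2_def zero_power)

lemma T2_1: "T2 d (1::'b) = of_nat d"
  by (simp add: T2_def)

lemma T2_sq: assumes "(z::'b) ^ (2 ^ d) = z" shows "T2 d (z ^ 2) = T2 d z"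
proof -
  have "T2 d (z ^ 2) = (\<Sum>k<d. z ^ (2 ^ Suc k))"
    unfolding T2_def by (intro sum.cong refl) (simp add: power_mult[symmetric] mult.commute)
  also have "\<dots> = (\<Sum>k<Suc d. z ^ (2 ^ k)) - z"
    by (subst sum.lessThan_Suc_shift) simp
  also have "\<dots> = T2 d z + z ^ (2 ^ d) - z"
    by (simp add: T2_def)
  finally show ?thesis using assms by simp
qed


lemma T2_idem: "(T2 d (z::'b)) ^ 2 = T2 d z" if "z ^ (2 ^ d) = z"
proof -
  have "(T2 d z) ^ 2 = T2 d (z ^ 2)"
    unfolding T2_def using c2_pow2_sum[OF c2, of "\<lambda>k. z ^ 2 ^ k" "{..<d}" 1]
    by (simp add: power_mult[symmetric] mult.commute)
  then show ?thesis using T2_sq[OF that] by simp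
qed

lemma T2_01: "T2 d (z::'b) = 0 \<or> T2 d z = 1" if "z ^ (2 ^ d) = z"
proof -
  have "T2 d z * (T2 d z - 1) = 0" using T2_idem[OF that] by (simp add: power2_eq_square algebra_simps)
  then show ?thesis by simp
qed


lemma no_quad_root:
  assumes K: "(t::'b) ^ (2 ^ (3 * d)) = t" "\<sigma> ^ (2 ^ (3 * d)) = \<sigma>"
    and s0: "\<sigma> \<noteq> 0" and eq: "t ^ 2 + \<sigma> * t + 1 = 0"
  shows "T2 d (tr d (1 / \<sigma>)) = 0"
proof -
  define y where "y = t / \<sigma>"
  have e1: "t ^ 2 + \<sigma> * t = 1"
  proof -
    have "t ^ 2 + \<sigma> * t = - 1" using eq by (simp add: eq_neg_iff_add_eq_0)
    then show ?thesis using c2_minus[OF c2, of 1] by simp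
  qed
  have "y ^ 2 + y = (t ^ 2 + \<sigma> * t) / \<sigma> ^ 2"
    using s0 unfolding y_def power2_eq_square by (simp add: field_simps)
  then have yy: "y ^ 2 + y = (1 / \<sigma>) ^ 2" unfolding e1 by (simp add: power_divide)
  have yK: "y ^ (2 ^ (3 * d)) = y" unfolding y_def power_divide using K by simp
  define z where "z = tr d y"
  have zF: "z ^ (2 ^ d) = z" unfolding z_def by (rule tr_fixed[OF yK])
  have "tr d ((1 / \<sigma>) ^ 2) = z ^ 2 + z"
    unfolding yy[symmetric] tr_add tr_sq z_def by simp
  then have "T2 d ((tr d (1 / \<sigma>)) ^ 2) = T2 d (z ^ 2) + T2 d z"
    unfolding tr_sq by (simp add: T2_add)
  also have "\<dots> = 0" unfolding T2_sq[OF zF] by (rule c2_double[OF c2])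
  finally have A: "T2 d ((tr d (1 / \<sigma>)) ^ 2) = 0" .
  have "(1 / \<sigma>) ^ (2 ^ (3 * d)) = 1 / \<sigma>" unfolding power_divide using K by simp
  then have "(tr d (1 / \<sigma>)) ^ (2 ^ d) = tr d (1 / \<sigma>)" by (rule tr_fixed)
  from T2_sq[OF this] A show ?thesis by simp
qed

end



lemma card_roots_unity_bound:
  assumes "e > 0"
  shows "card {x::'b::field. x ^ e = 1} \<le> e" "finite {x::'b::field. x ^ e = 1}"
proof -
  define p :: "'b poly" where "p = monom 1 e - 1"
  have pp: "poly p x = x ^ e - 1" for x by (simp add: p_def poly_monom)
  have deg: "degree p = e"
  proof -
    have "degree (- 1 :: 'b poly) < degree (monom (1::'b) e)"
      using assms by (simp add: degree_monom_eq)
    then have "degree (monom (1::'b) e + - 1) = e"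
      by (subst degree_add_eq_left) (auto simp: degree_monom_eq)
    then show ?thesis unfolding p_def by (metis diff_conv_add_uminus)
  qed
  have p0: "p \<noteq> 0" using deg assms by auto
  have roots: "{x. x ^ e = 1} = {x. poly p x = 0}" by (auto simp: pp)
  show "card {x::'b::field. x ^ e = 1} \<le> e" using card_poly_roots_bound[OF p0] deg roots by simp
  show "finite {x::'b::field. x ^ e = 1}" using poly_roots_finite[OF p0] roots by simp
qed

lemma orth_sum:
  fixes n :: nat
  assumes c2: "(1::'b::alg_closed_field) + 1 = 0" and n: "n \<ge> 1"
  defines "Ks \<equiv> {x::'b. x ^ (2 ^ n) = x} - {0}"
  shows "(\<Sum>r\<in>Ks. r ^ e) = (if (2 ^ n - 1) dvd e then 1 else 0)"
proof -
  define N where "N = (2::nat) ^ n - 1"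
  have fin: "finite Ks" unfolding Ks_def using card_roots_x_pow2(2)[OF c2 n] by simp
  have cK: "card Ks = N" unfolding Ks_def N_def using card_roots_x_pow2(1)[OF c2 n]
    card_roots_x_pow2(2)[OF c2 n] by (simp add: card_Diff_singleton zero_power)
  have pos: "(2::nat) ^ n \<ge> 2" using n by (metis one_le_numeral power_increasing power_one_right)
  have rN: "r ^ N = 1" if "r \<in> Ks" for r
  proof -
    have "r * r ^ N = r ^ (2 ^ n)" using pos by (simp add: N_def power_Suc[symmetric])
    also have "\<dots> = r" using that by (simp add: Ks_def)
    finally show ?thesis using that by (simp add: Ks_def)
  qed
  have rmod: "r ^ e = r ^ (e mod N)" if "r \<in> Ks" for r
  proof -
    have "r ^ e = r ^ (N * (e div N) + e mod N)" by simp
    also have "\<dots> = (r ^ N) ^ (e div N) * r ^ (e mod N)"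
      by (simp only: power_add power_mult)
    finally have "r ^ e = (r ^ N) ^ (e div N) * r ^ (e mod N)" .
    then show ?thesis using rN[OF that] by simp
  qed
  show ?thesis
  proof (cases "N dvd e")
    case True
    then have "(\<Sum>r\<in>Ks. r ^ e) = (\<Sum>r\<in>Ks. 1)" using rmod by (intro sum.cong) auto
    also have "\<dots> = of_nat N" using cK by simp
    also have "\<dots> = 1" using c2_of_nat[OF c2, of N] pos n by (simp add: N_def)
    finally show ?thesis using True by (simp add: N_def)
  next
    case False
    define e' where "e' = e mod N"
    have e'pos: "e' > 0" using False by (simp add: e'_def dvd_eq_mod_eq_0)
    have e'lt: "e' < N" using pos by (simp add: e'_def N_def)
    have "\<exists>g\<in>Ks. g ^ e' \<noteq> 1"
    proof (rule ccontr)
      assume "\<not> ?thesis"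
      then have "Ks \<subseteq> {x. x ^ e' = 1}" by auto
      then have "card Ks \<le> card {x::'b. x ^ e' = 1}"
        using card_roots_unity_bound(2)[OF e'pos] by (rule card_mono[rotated])
      also have "\<dots> \<le> e'" by (rule card_roots_unity_bound(1)[OF e'pos])
      finally show False using cK e'lt by simp
    qed
    then obtain g where g: "g \<in> Ks" "g ^ e' \<noteq> 1" by blast
    have g0: "g \<noteq> 0" using g by (simp add: Ks_def)
    have inj: "inj_on ((*) g) Ks" using g0 by (auto simp: inj_on_def)
    have img: "(*) g ` Ks = Ks"
    proof
      show "(*) g ` Ks \<subseteq> Ks" using g g0 by (auto simp: Ks_def power_mult_distrib)
      show "Ks \<subseteq> (*) g ` Ks"
      proof
        fix y assume y: "y \<in> Ks"
        then have "y = g * (y / g)" "y / g \<in> Ks" using g g0 by (auto simp: Ks_def power_divide)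
        then show "y \<in> (*) g ` Ks" by blast
      qed
    qed
    have "(\<Sum>r\<in>Ks. r ^ e) = (\<Sum>r\<in>(*) g ` Ks. r ^ e)" using img by simp
    also have "\<dots> = (\<Sum>r\<in>Ks. (g * r) ^ e)" using sum.reindex[OF inj] by simp
    also have "\<dots> = g ^ e * (\<Sum>r\<in>Ks. r ^ e)" by (simp add: power_mult_distrib sum_distrib_left)
    finally have "(g ^ e - 1) * (\<Sum>r\<in>Ks. r ^ e) = 0" by (simp add: algebra_simps)
    moreover have "g ^ e \<noteq> 1" using g rmod[OF g(1)] by (simp add: e'_def)
    ultimately show ?thesis using False by (simp add: N_def)
  qed
qed




lemma nd_int: "x \<noteq> 0 \<Longrightarrow> -n < x \<Longrightarrow> x < n \<Longrightarrow> \<not> n dvd (x::int)"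
  using dvd_imp_le_int[of x n] by auto

lemma hit_core:
  fixes q a m :: int and i j :: nat
  assumes q: "q \<ge> 4" and a: "a \<ge> 1" "2 * a \<le> q" "a \<noteq> 3"
    and m: "m = q - 1 \<or> m = 3 * (q - 1)" and i: "i < 3" and j: "j < 3"
  shows "(q ^ 3 - 1) dvd (a * (q ^ i - q ^ j) + m) \<longleftrightarrow> (m = q - 1 \<and> a = 1 \<and> i = 0 \<and> j = 1)"
proof -
  define Q2 where "Q2 = q * q"
  define Q3 where "Q3 = q * q * q"
  define A1 where "A1 = a * q"
  define A2 where "A2 = a * q * q"
  have h1: "2 * A1 \<le> Q2" using mult_right_mono[OF a(2), of q] q by (simp add: algebra_simps A1_def Q2_def)
  have h2: "2 * A2 \<le> Q3" using mult_right_mono[OF h1, of q] q by (simp add: algebra_simps A2_def Q3_def A1_def Q2_def)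
  have h3: "4 * q \<le> Q2" using mult_right_mono[OF q, of q] q by (simp add: Q2_def)
  have h4: "4 * Q2 \<le> Q3" using mult_right_mono[OF h3, of q] q by (simp add: algebra_simps Q2_def Q3_def)
  have h5: "A1 \<ge> q" using mult_right_mono[OF a(1), of q] q by (simp add: A1_def)
  have h6: "A2 \<ge> Q2" using mult_right_mono[OF h5, of q] q by (simp add: algebra_simps A1_def A2_def Q2_def)
  have h7: "A2 - A1 \<ge> Q2 - q"
  proof -
    have "Q2 - q \<ge> 0" using h3 q by simp
    then have "a * (Q2 - q) \<ge> 1 * (Q2 - q)" using a(1) by (intro mult_right_mono) auto
    then show ?thesis by (simp add: A1_def A2_def Q2_def algebra_simps)
  qed
  have aqi: "a * q ^ i = (if i = 0 then a else if i = 1 then A1 else A2)"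
    using i by (auto simp: A1_def A2_def power2_eq_square less_Suc_eq numeral_3_eq_3 mult.assoc)
  have aqj: "a * q ^ j = (if j = 0 then a else if j = 1 then A1 else A2)"
    using j by (auto simp: A1_def A2_def power2_eq_square less_Suc_eq numeral_3_eq_3 mult.assoc)
  have N: "q ^ 3 - 1 = Q3 - 1" by (simp add: power3_eq_cube Q3_def)
  have X: "a * (q ^ i - q ^ j) + m = a * q ^ i - a * q ^ j + m" by (simp add: algebra_simps)
  have i3: "i = 0 \<or> i = 1 \<or> i = 2" using i by auto
  have j3: "j = 0 \<or> j = 1 \<or> j = 2" using j by auto
  have vi: "(i = 0 \<and> a * q ^ i = a) \<or> (i = 1 \<and> a * q ^ i = A1) \<or> (i = 2 \<and> a * q ^ i = A2)"
    using i3 aqi by auto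
  have vj: "(j = 0 \<and> a * q ^ j = a) \<or> (j = 1 \<and> a * q ^ j = A1) \<or> (j = 2 \<and> a * q ^ j = A2)"
    using j3 aqj by auto
  show ?thesis
  proof (cases "m = q - 1 \<and> a = 1 \<and> i = 0 \<and> j = 1")
    case True then show ?thesis by simp
  next
    case False
    have ne: "a * q ^ i - a * q ^ j + m \<noteq> 0"
    proof (cases "i = 0 \<and> j = 1")
      case True
      have "a - A1 + m \<noteq> 0"
      proof (cases "m = q - 1")
        case True
        with False \<open>i = 0 \<and> j = 1\<close> have "a \<ge> 2" using a by auto
        then have "A1 \<ge> 2 * q" using mult_right_mono[of 2 a q] q by (simp add: A1_def)
        moreover have "a - A1 + m = - ((a - 1) * (q - 1))" using True by (simp add: A1_def algebra_simps)
        moreover have "(a - 1) * (q - 1) > 0" using \<open>a \<ge> 2\<close> q by simp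
        ultimately show ?thesis by linarith
      next
        case False
        then have m3: "m = 3 * (q - 1)" using m by simp
        have "a - A1 + m = (3 - a) * (q - 1)" using m3 by (simp add: A1_def algebra_simps)
        moreover have "3 - a \<noteq> 0" using a by simp
        moreover have "q - 1 \<noteq> 0" using q by simp
        ultimately show ?thesis by simp
      qed
      then show ?thesis using True aqi aqj by simp
    next
      case False
      show ?thesis
      proof
        assume X0: "a * q ^ i - a * q ^ j + m = 0"
        show False
          using vi vj m X0 False h1 h2 h3 h4 h5 h6 h7 a q by smt
      qed
    qed
    have "- (Q3 - 1) < a * q ^ i - a * q ^ j + m \<and> a * q ^ i - a * q ^ j + m < Q3 - 1"
      using vi vj m h1 h2 h3 h4 h5 h6 h7 a q by smt
    then show ?thesis using nd_int[OF ne] False N X by auto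
  qed
qed




lemma tr_sum: "tr d x = (\<Sum>i<3. x ^ (2 ^ (d * i)))"
  by (simp add: tr_def numeral_3_eq_3 lessThan_Suc mult.commute mult_2_right)

lemma hit_lemma:
  fixes d k i j m :: nat
  assumes d: "d \<ge> 2" and k: "k < d" and i: "i < 3" and j: "j < 3"
    and m: "m = 2 ^ d - 1 \<or> m = 3 * (2 ^ d - 1)"
  shows "((2::nat) ^ (3 * d) - 1) dvd (2 ^ k * (2 ^ (d * i) + (2 ^ (3 * d) - 1 - 2 ^ (d * j))) + m)
     \<longleftrightarrow> (m = 2 ^ d - 1 \<and> k = 0 \<and> i = 0 \<and> j = 1)"
proof -
  define q :: int where "q = 2 ^ d"
  define a :: int where "a = 2 ^ k"
  have q4: "q \<ge> 4"
  proof -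
    have "(2::int) ^ 2 \<le> 2 ^ d" using d by (intro power_increasing) auto
    then show ?thesis by (simp add: q_def)
  qed
  have a1: "a \<ge> 1" by (simp add: a_def)
  have a2: "2 * a \<le> q"
  proof -
    have "(2::int) ^ Suc k \<le> 2 ^ d" using k by (intro power_increasing) auto
    then show ?thesis by (simp add: a_def q_def)
  qed
  have a3: "a \<noteq> 3"
  proof (cases k)
    case 0 then show ?thesis by (simp add: a_def)
  next
    case (Suc k')
    then have "even a" by (simp add: a_def)
    then show ?thesis by auto
  qed
  have a1iff: "a = 1 \<longleftrightarrow> k = 0" by (simp add: a_def)
  have qm1: "int (2 ^ d - 1) = q - 1" by (simp add: q_def of_nat_diff)
  have mq: "int m = q - 1 \<or> int m = 3 * (q - 1)"
    using m qm1 by auto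
  have mqiff: "int m = q - 1 \<longleftrightarrow> m = 2 ^ d - 1" using qm1 by (metis of_nat_eq_iff)
  have p3: "(2::nat) ^ (3 * d) = 2 ^ d * 2 ^ d * 2 ^ d" by (simp add: power_mult[symmetric] power_add[symmetric] numeral_3_eq_3 algebra_simps)
  have le1: "(1::nat) \<le> 2 ^ (3 * d)" by simp
  have leq: "(2::nat) ^ (d * j) \<le> 2 ^ (3 * d) - 1"
  proof -
    have "(2::nat) ^ (d * j) \<le> 2 ^ (d * 2)" using j by (intro power_increasing) auto
    also have "\<dots> < 2 ^ (3 * d)" using d by (intro power_strict_increasing) auto
    finally show ?thesis by linarith
  qed
  have qi: "int (2 ^ (d * i)) = q ^ i" "int (2 ^ (d * j)) = q ^ j" by (simp_all add: q_def power_mult)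
  have N: "int (2 ^ (3 * d) - 1) = q ^ 3 - 1"
    using le1 by (simp add: of_nat_diff q_def power_mult[symmetric] mult.commute)
  have E: "int (2 ^ k * (2 ^ (d * i) + (2 ^ (3 * d) - 1 - 2 ^ (d * j))) + m)
      = a * (q ^ 3 - 1) + (a * (q ^ i - q ^ j) + int m)"
  proof -
    have h: "int (2 ^ (3 * d) - 1 - 2 ^ (d * j)) = (q ^ 3 - 1) - q ^ j"
      unfolding of_nat_diff[OF leq] N qi(2) ..
    have ak: "int (2 ^ k) = a" by (simp add: a_def)
    have e: "int (2 ^ k * (2 ^ (d * i) + (2 ^ (3 * d) - 1 - 2 ^ (d * j))) + m)
       = int (2 ^ k) * (int (2 ^ (d * i)) + int (2 ^ (3 * d) - 1 - 2 ^ (d * j))) + int m"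
      by (simp only: of_nat_add of_nat_mult)
    show ?thesis unfolding e h qi(1) ak by (simp add: algebra_simps)
  qed
  have "((2::nat) ^ (3 * d) - 1) dvd (2 ^ k * (2 ^ (d * i) + (2 ^ (3 * d) - 1 - 2 ^ (d * j))) + m)
      \<longleftrightarrow> (q ^ 3 - 1) dvd (a * (q ^ 3 - 1) + (a * (q ^ i - q ^ j) + int m))"
    by (subst int_dvd_int_iff[symmetric]) (simp only: N E)
  also have "\<dots> \<longleftrightarrow> (q ^ 3 - 1) dvd (a * (q ^ i - q ^ j) + int m)"
    by (simp add: dvd_add_right_iff)
  also have "\<dots> \<longleftrightarrow> (int m = q - 1 \<and> a = 1 \<and> i = 0 \<and> j = 1)"
    by (rule hit_core[OF q4 a1 a2 a3 mq i j])
  also have "\<dots> \<longleftrightarrow> (m = 2 ^ d - 1 \<and> k = 0 \<and> i = 0 \<and> j = 1)"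
    using a1iff mqiff by simp
  finally show ?thesis .
qed

lemma main_exists:
  fixes d :: nat
  assumes c2: "(1::'b::alg_closed_field) + 1 = 0" and d: "d \<ge> 2"
  shows "\<exists>r::'b. r ^ (2 ^ (3 * d)) = r \<and> r \<noteq> 0 \<and> r ^ (2 ^ d) \<noteq> r
            \<and> T2 d (tr d r * tr d (1 / r)) \<noteq> 0"
proof (rule ccontr)
  assume H0: "\<not> ?thesis"
  define Ks where "Ks = {x::'b. x ^ (2 ^ (3 * d)) = x} - {0}"
  define Fs where "Fs = {x::'b. x ^ (2 ^ d) = x} - {0}"
  define N where "N = (2::nat) ^ (3 * d) - 1"
  define \<Phi> where "\<Phi> = (\<lambda>r::'b. T2 d (tr d r * tr d (1 / r)))"
  have n3: "3 * d \<ge> 1" using d by simp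
  have d1: "d \<ge> 1" using d by simp
  have H: "\<Phi> r = 0" if "r \<in> Ks" "r \<notin> Fs" for r
    using H0 that by (auto simp: Ks_def Fs_def \<Phi>_def)
  have FK: "Fs \<subseteq> Ks"
    unfolding Fs_def Ks_def using pow_pow2_fix[of _ d 3] by (auto simp: mult.commute)
  have finK: "finite Ks" unfolding Ks_def using card_roots_x_pow2(2)[OF c2 n3] by simp
  have cF: "card Fs = 2 ^ d - 1" unfolding Fs_def using card_roots_x_pow2(1)[OF c2 d1]
    card_roots_x_pow2(2)[OF c2 d1] by (simp add: card_Diff_singleton zero_power)
  have finF: "finite Fs" using FK finK by (rule finite_subset)
  have q4: "(2::nat) ^ d \<ge> 4" using d by (metis power2_eq_square numeral_Bit0 power_increasing
      mult_2 numeral_le_one_iff semiring_norm(69) zero_less_numeral le_numeral_extra(4) numeral_2_eq_2 one_add_one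
      numeral_times_numeral semiring_norm(12) semiring_norm(13) semiring_norm(5) power_one_right
      Suc_1 less_2_cases_iff not_less_eq_eq one_le_numeral)
  have rN: "r ^ N = 1" if "r \<in> Ks" for r
  proof -
    have "(2::nat) ^ (3 * d) \<ge> 1" by simp
    then have "r * r ^ N = r ^ (2 ^ (3 * d))" by (simp add: N_def power_Suc[symmetric])
    also have "\<dots> = r" using that by (simp add: Ks_def)
    finally show ?thesis using that by (simp add: Ks_def)
  qed
  have qjN: "(2::nat) ^ (d * j) \<le> N" if "j < 3" for j
  proof -
    have "(2::nat) ^ (d * j) \<le> 2 ^ (d * 2)" using that by (intro power_increasing) auto
    also have "\<dots> < 2 ^ (3 * d)" using d by (intro power_strict_increasing) auto
    finally show ?thesis unfolding N_def by linarith
  qed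
  have inv_pow: "(1 / r) ^ (2 ^ (d * j)) = r ^ (N - 2 ^ (d * j))" if "r \<in> Ks" "j < 3" for r j
  proof -
    have r0: "r \<noteq> 0" using that by (simp add: Ks_def)
    have "r ^ (2 ^ (d * j)) * r ^ (N - 2 ^ (d * j)) = r ^ N"
      using qjN[OF that(2)] by (simp add: power_add[symmetric])
    then have "r ^ (N - 2 ^ (d * j)) = 1 / r ^ (2 ^ (d * j))" using rN[OF that(1)] r0
      by (simp add: field_simps)
    then show ?thesis by (simp add: power_one_over)
  qed
  have Phi_exp: "\<Phi> r = (\<Sum>k<d. \<Sum>i<3. \<Sum>j<3. r ^ (2 ^ k * (2 ^ (d * i) + (N - 2 ^ (d * j)))))"
    if "r \<in> Ks" for r
  proof -
    have "tr d r * tr d (1 / r) = (\<Sum>i<3. \<Sum>j<3. r ^ (2 ^ (d * i)) * (1 / r) ^ (2 ^ (d * j)))"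
      by (simp add: tr_sum sum_product)
    also have "\<dots> = (\<Sum>i<3. \<Sum>j<3. r ^ (2 ^ (d * i) + (N - 2 ^ (d * j))))"
      using inv_pow[OF that] by (intro sum.cong refl) (simp add: power_add)
    finally have e: "tr d r * tr d (1 / r) = (\<Sum>i<3. \<Sum>j<3. r ^ (2 ^ (d * i) + (N - 2 ^ (d * j))))" .
    show ?thesis unfolding \<Phi>_def T2_def e
      by (simp add: c2_pow2_sum[OF c2] power_mult[symmetric] mult.commute)
  qed
  define m where "m = (if even d then 2 ^ d - 1 else 3 * (2 ^ d - 1 :: nat))"
  have mq: "m = 2 ^ d - 1 \<or> m = 3 * (2 ^ d - 1)" by (simp add: m_def)
  have dvdm: "(2 ^ d - 1) dvd m" by (simp add: m_def)
  have orth: "(\<Sum>r\<in>Ks. r ^ e) = (if N dvd e then 1 else 0)" for e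
    unfolding Ks_def N_def by (rule orth_sum[OF c2 n3])
  define S where "S = (\<Sum>r\<in>Ks. \<Phi> r * r ^ m)"
  have S1: "S = (\<Sum>k<d. \<Sum>i<3. \<Sum>j<3. (if N dvd (2 ^ k * (2 ^ (d * i) + (N - 2 ^ (d * j))) + m) then 1 else 0 :: 'b))"
  proof -
    have "S = (\<Sum>r\<in>Ks. \<Sum>k<d. \<Sum>i<3. \<Sum>j<3. r ^ (2 ^ k * (2 ^ (d * i) + (N - 2 ^ (d * j))) + m))"
      unfolding S_def by (intro sum.cong refl) (simp add: Phi_exp sum_distrib_right power_add)
    also have "\<dots> = (\<Sum>k<d. \<Sum>i<3. \<Sum>j<3. \<Sum>r\<in>Ks. r ^ (2 ^ k * (2 ^ (d * i) + (N - 2 ^ (d * j))) + m))"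
      by (subst sum.swap, subst (2) sum.swap, subst (3) sum.swap, rule refl)
    also have "\<dots> = (\<Sum>k<d. \<Sum>i<3. \<Sum>j<3. (if N dvd (2 ^ k * (2 ^ (d * i) + (N - 2 ^ (d * j))) + m) then 1 else 0 :: 'b))"
      by (simp only: orth)
    finally show ?thesis .
  qed
  have S1': "S = (if m = 2 ^ d - 1 then 1 else 0)"
  proof -
    have "S = (\<Sum>k<d. \<Sum>i<(3::nat). \<Sum>j<(3::nat). (if m = 2 ^ d - 1 \<and> k = 0 \<and> i = 0 \<and> j = 1 then 1 else 0 :: 'b))"
      unfolding S1 N_def using hit_lemma[OF d _ _ _ mq]
      by (intro sum.cong refl) (simp del: One_nat_def)
    also have "\<dots> = (\<Sum>k<d. (if m = 2 ^ d - 1 \<and> k = 0 then 1 else 0 :: 'b))"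
      by (intro sum.cong refl) (simp add: numeral_3_eq_3 lessThan_Suc)
    also have "\<dots> = (if m = 2 ^ d - 1 then 1 else 0)"
      using d by (simp add: sum.delta)
    finally show ?thesis .
  qed
  have PhiF: "\<Phi> r = of_nat d" if "r \<in> Fs" for r
  proof -
    have trF: "tr d x = x" if "x ^ (2 ^ d) = x" for x :: 'b
    proof -
      have "x ^ (2 ^ (2 * d)) = x" using pow_pow2_fix[OF that, of 2] by (simp add: mult.commute)
      moreover have "x + x + x = x" using c2_double[OF c2, of x] by (metis add_0_left)
      ultimately show ?thesis using that by (simp only: tr_def)
    qed
    have r: "r ^ (2 ^ d) = r" "r \<noteq> 0" using that by (auto simp: Fs_def)
    have "(1 / r) ^ (2 ^ d) = 1 / r" using r by (simp add: power_divide)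
    then have "tr d r * tr d (1 / r) = 1" using trF r by simp
    then show ?thesis by (simp add: \<Phi>_def T2_1[OF c2])
  qed
  have rmF: "r ^ m = 1" if "r \<in> Fs" for r
  proof -
    have r: "r ^ (2 ^ d) = r" "r \<noteq> 0" using that by (auto simp: Fs_def)
    have "(2::nat) ^ d \<ge> 1" by simp
    then have "r * r ^ (2 ^ d - 1) = r ^ (2 ^ d)" by (simp add: power_Suc[symmetric])
    then have "r ^ (2 ^ d - 1) = 1" using r by simp
    moreover obtain c where "m = (2 ^ d - 1) * c" using dvdm by (elim dvdE)
    ultimately show ?thesis by (simp add: power_mult)
  qed
  have S2: "S = of_nat d"
  proof -
    have "S = (\<Sum>r\<in>Fs. \<Phi> r * r ^ m)"
      unfolding S_def using finK FK H by (intro sum.mono_neutral_right) auto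
    also have "\<dots> = (\<Sum>r\<in>Fs. of_nat d)" using PhiF rmF by (intro sum.cong refl) simp
    also have "\<dots> = of_nat d * of_nat (2 ^ d - 1)" using cF by simp
    also have "\<dots> = of_nat d" using c2_of_nat[OF c2, of "2 ^ d - 1"] d by simp
    finally show ?thesis .
  qed
  show False
  proof (cases "even d")
    case True
    then have "S = 1" using S1' by (simp add: m_def)
    moreover have "S = 0" using S2 c2_of_nat[OF c2, of d] True by simp
    ultimately show False by simp
  next
    case False
    have "m \<noteq> 2 ^ d - 1" using False q4 by (simp add: m_def)
    then have "S = 0" using S1' by simp
    moreover have "S = 1" using S2 c2_of_nat[OF c2, of d] False by simp
    ultimately show False by simp
  qed
qed




lemma map_ac_add: "map_poly to_ac (p + q) = map_poly to_ac p + map_poly (to_ac :: 'a::field \<Rightarrow> _) q"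
  by (intro poly_eqI) (simp add: coeff_map_poly)

lemma map_ac_mult: "map_poly to_ac (p * q) = map_poly to_ac p * map_poly (to_ac :: 'a::field \<Rightarrow> _) q"
proof (induction p)
  case 0 then show ?case by simp
next
  case (pCons c p)
  have "map_poly to_ac (pCons c p * q) = map_poly to_ac (smult c q + pCons 0 (p * q))"
    by (simp add: mult_pCons_left)
  also have "\<dots> = smult (to_ac c) (map_poly to_ac q) + pCons 0 (map_poly to_ac p * map_poly to_ac q)"
    by (simp add: map_ac_add map_poly_smult map_poly_pCons pCons.IH)
  also have "\<dots> = map_poly to_ac (pCons c p) * map_poly to_ac q"
    by (simp add: map_poly_pCons mult_pCons_left)
  finally show ?case .
qed

lemma poly_frob:
  fixes p :: "'b::field poly"
  assumes c2: "(1::'b) + 1 = 0" and cfix: "\<And>i. coeff p i ^ (2 ^ n) = coeff p i"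
  shows "poly p (x ^ (2 ^ n)) = (poly p x) ^ (2 ^ n)"
  using cfix
proof (induction p)
  case 0 then show ?case by (simp add: zero_power)
next
  case (pCons c p)
  have cf: "c ^ (2 ^ n) = c" using pCons.prems[of 0] by simp
  have pf: "\<And>i. coeff p i ^ (2 ^ n) = coeff p i" using pCons.prems[of "Suc _"] by simp
  show ?case using pCons.IH[OF pf] cf by (simp add: c2_pow2_add[OF c2] power_mult_distrib)
qed

lemma pow_pow2_comm: "((x::'b::field) ^ (2 ^ a)) ^ (2 ^ b) = (x ^ (2 ^ b)) ^ (2 ^ a)"
  by (simp add: pow_pow2 add.commute)

lemma K_pow: assumes "(x::'b::field) ^ (2 ^ N) = x" shows "(x ^ (2 ^ n)) ^ (2 ^ N) = x ^ (2 ^ n)"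
  using assms by (simp add: pow_pow2_comm[of x n N])

lemma tr_iter:
  assumes c2: "(1::'b::field) + 1 = 0" and yK: "(y::'b) ^ (2 ^ (3 * d)) = y"
  shows "tr d (y ^ (2 ^ (d * n))) = tr d y"
proof (induction n)
  case 0 then show ?case by simp
next
  case (Suc n)
  have e: "y ^ (2 ^ (d * Suc n)) = (y ^ (2 ^ (d * n))) ^ (2 ^ d)" by (simp add: pow_pow2 add.commute)
  have "(y ^ (2 ^ (d * n))) ^ (2 ^ (3 * d)) = y ^ (2 ^ (d * n))" by (rule K_pow[OF yK])
  then show ?case unfolding e using tr_frob[OF c2] Suc by simp
qed




theorem proposition7p12:
  fixes d :: nat
  assumes "d \<ge> 2"
    and "card (UNIV :: 'a::{field,finite} set) = 2 ^ d"
  shows "\<exists>f0 f1 :: 'a. irreducible [:1, 1, f1, f0, f1, 1, 1:]"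
proof -
  note d = assms(1) and card = assms(2)
  have d1: "d \<ge> 1" using d by simp
  have c2a: "(1::'a) + 1 = 0" by (rule char2_of_card[OF d1 card])
  have c2: "(1::'a alg_closure) + 1 = 0"
    by (metis c2a to_ac_1 to_ac_add to_ac_0)
  have ferm: "(a::'a) ^ (2 ^ d) = a" for a using fermat_finite_field[of a] card by simp
  have Frange: "x \<in> range (to_ac :: 'a \<Rightarrow> 'a alg_closure)" if "x ^ (2 ^ d) = x" for x :: "'a alg_closure"
  proof -
    define S where "S = {x::'a alg_closure. x ^ (2 ^ d) = x}"
    have sub: "range (to_ac :: 'a \<Rightarrow> 'a alg_closure) \<subseteq> S"
      using ferm by (auto simp: S_def simp flip: to_ac_power)
    have "card (range (to_ac :: 'a \<Rightarrow> 'a alg_closure)) = 2 ^ d"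
      using card by (simp add: card_image inj_to_ac)
    moreover have "card S = 2 ^ d" "finite S" unfolding S_def using card_roots_x_pow2[OF c2 d1] by auto
    ultimately have "range (to_ac :: 'a \<Rightarrow> 'a alg_closure) = S" using sub by (metis card_subset_eq)
    then show ?thesis using that by (simp add: S_def)
  qed
  obtain r :: "'a alg_closure" where rK: "r ^ (2 ^ (3 * d)) = r" and r0: "r \<noteq> 0"
    and rF: "r ^ (2 ^ d) \<noteq> r" and rT: "T2 d (tr d r * tr d (1 / r)) \<noteq> 0"
    using main_exists[OF c2 d] by blast
  define \<mu> where "\<mu> = tr d (1 / r)"
  have iK: "(1 / r) ^ (2 ^ (3 * d)) = 1 / r" using rK by (simp add: power_divide)
  have \<mu>F: "\<mu> ^ (2 ^ d) = \<mu>" unfolding \<mu>_def by (rule tr_fixed[OF c2 iK])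
  have \<mu>0: "\<mu> \<noteq> 0" using rT T2_0[OF c2, of d] by (auto simp: \<mu>_def)
  have \<mu>K: "\<mu> ^ (2 ^ (3 * d)) = \<mu>" using pow_pow2_fix[OF \<mu>F, of 3] by (simp add: mult.commute)
  define s where "s = 1 / (\<mu> * r)"
  have s0: "s \<noteq> 0" using \<mu>0 r0 by (simp add: s_def)
  have sK: "s ^ (2 ^ (3 * d)) = s" using \<mu>K rK by (simp add: s_def power_divide power_mult_distrib)
  have sF: "s ^ (2 ^ d) \<noteq> s"
  proof
    assume "s ^ (2 ^ d) = s"
    then have "\<mu> ^ (2 ^ d) * r ^ (2 ^ d) = \<mu> * r"
      by (simp add: s_def power_divide power_mult_distrib)
    then have "r ^ (2 ^ d) = r" using \<mu>F \<mu>0 by simp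
    then show False using rF by simp
  qed
  have trs: "tr d s = 1"
  proof -
    have i\<mu>: "(1 / \<mu>) ^ (2 ^ d) = 1 / \<mu>" using \<mu>F by (simp add: power_divide)
    have "s = (1 / \<mu>) * (1 / r)" by (simp add: s_def)
    then have "tr d s = tr d ((1 / \<mu>) * (1 / r))" by simp
    also have "\<dots> = (1 / \<mu>) * tr d (1 / r)" by (rule tr_scale[OF c2 i\<mu>])
    also have "\<dots> = 1" using \<mu>0 by (simp add: \<mu>_def)
    finally show ?thesis .
  qed
  have Ts: "T2 d (tr d (1 / s)) \<noteq> 0"
  proof -
    have "1 / s = \<mu> * r" by (simp add: s_def)
    then have "tr d (1 / s) = \<mu> * tr d r" using tr_scale[OF c2 \<mu>F] by simp
    then show ?thesis using rT by (simp add: \<mu>_def mult.commute)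
  qed
  define sq where "sq = s ^ (2 ^ d)"
  define sq2 where "sq2 = s ^ (2 ^ (2 * d))"
  have sq_fr: "sq ^ (2 ^ d) = sq2" by (simp add: sq_def sq2_def pow_pow2 mult_2)
  have sq2_fr: "sq2 ^ (2 ^ d) = s" using sK by (simp add: sq2_def pow_pow2 numeral_3_eq_3)
  have trs': "s + sq + sq2 = 1" using trs by (simp add: tr_def sq_def sq2_def)
  define c1 where "c1 = s * sq + s * sq2 + sq * sq2"
  define c0 where "c0 = s * sq * sq2"
  have c1F: "c1 ^ (2 ^ d) = c1"
    by (simp add: c1_def c2_pow2_add[OF c2] power_mult_distrib sq_fr sq2_fr sq_def[symmetric] algebra_simps)
  have c0F: "c0 ^ (2 ^ d) = c0"
    by (simp add: c0_def power_mult_distrib sq_fr sq2_fr sq_def[symmetric] algebra_simps)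
  obtain b1 where b1: "to_ac b1 = c1" using Frange[OF c1F] by auto
  obtain b0 where b0: "to_ac b0 = c0" using Frange[OF c0F] by auto
  define P where "P = [:1, 1, b1 + 1, b0, b1 + 1, 1, 1:]"
  have PL: "map_poly to_ac P = [:1, 1, c1 + 1, c0, c1 + 1, 1, 1:]"
    by (simp add: P_def map_poly_pCons b1 b0)
  have degP: "degree P = 6" by (simp add: P_def)
  have P0: "P \<noteq> 0" using degP by auto
  have key: False if g: "g dvd P" "degree g \<ge> 1" "degree g \<le> 3" for g
  proof -
    define G where "G = map_poly (to_ac :: 'a \<Rightarrow> 'a alg_closure) g"
    have degG: "degree G = degree g" unfolding G_def by (rule degree_map_poly) simp
    obtain \<alpha> where \<alpha>: "poly G \<alpha> = 0" using alg_closed_imp_poly_has_root[of G] degG g by auto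
    obtain h where h: "P = g * h" using g(1) by (elim dvdE)
    have Pa: "poly (map_poly to_ac P) \<alpha> = 0" unfolding h map_ac_mult using \<alpha> by (simp add: G_def)
    have a0: "\<alpha> \<noteq> 0" using Pa by (auto simp: PL)
    have Gcoef: "coeff G i ^ (2 ^ d) = coeff G i" for i
      unfolding G_def by (simp add: coeff_map_poly ferm flip: to_ac_power)
    have Gfrob: "poly G (x ^ (2 ^ d)) = (poly G x) ^ (2 ^ d)" for x by (rule poly_frob[OF c2 Gcoef])
    define f where "f n = \<alpha> ^ (2 ^ (d * n))" for n
    have iter: "poly G (f n) = 0" for n
    proof (induction n)
      case 0 then show ?case using \<alpha> by (simp add: f_def)
    next
      case (Suc n)
      have "f (Suc n) = (f n) ^ (2 ^ d)" by (simp add: f_def pow_pow2 add.commute)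
      then show ?case using Gfrob Suc by (simp add: zero_power)
    qed
    have G0: "G \<noteq> 0" using degG g by auto
    define R where "R = {x. poly G x = 0}"
    have finR: "finite R" unfolding R_def by (rule poly_roots_finite[OF G0])
    have cR: "card R \<le> 3" using card_poly_roots_bound[OF G0] degG g by (simp add: R_def)
    have "\<not> inj_on f {0..3}"
    proof
      assume "inj_on f {0..3}"
      then have "card (f ` {0..3}) = 4" by (simp add: card_image)
      moreover have "f ` {0..3} \<subseteq> R" using iter by (auto simp: R_def)
      ultimately have "4 \<le> card R" using finR by (metis card_mono)
      then show False using cR by simp
    qed
    then obtain i j where ij: "i < j" "j \<le> 3" "f i = f j"
      unfolding inj_on_def by (metis atLeastAtMost_iff linorder_neqE_nat)
    define m where "m = j - i"
    have m13: "1 \<le> m" "m \<le> 3" using ij by (auto simp: m_def)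
    have am: "\<alpha> ^ (2 ^ (d * m)) = \<alpha>"
    proof -
      have "f j = (\<alpha> ^ (2 ^ (d * m))) ^ (2 ^ (d * i))"
        using ij by (simp add: f_def pow_pow2 m_def algebra_simps diff_mult_distrib2)
      then have "(\<alpha> ^ (2 ^ (d * m))) ^ (2 ^ (d * i)) = \<alpha> ^ (2 ^ (d * i))" using ij by (simp add: f_def)
      then show ?thesis using c2_pow2_inj[OF c2] by blast
    qed
    define u where "u = \<alpha> + 1 / \<alpha>"
    have hv: "\<alpha> * u = \<alpha> ^ 2 + 1" using a0 by (simp add: u_def distrib_left power2_eq_square)
    have e1: "(u + s) * (u + sq) * (u + sq2) = u ^ 3 + (s + sq + sq2) * u ^ 2 + c1 * u + c0"
      unfolding c1_def c0_def by (simp add: algebra_simps power2_eq_square power3_eq_cube)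
    have e2: "\<alpha> ^ 3 * (u ^ 3 + u ^ 2 + c1 * u + c0)
        = (\<alpha> * u) ^ 3 + \<alpha> * (\<alpha> * u) ^ 2 + c1 * \<alpha> ^ 2 * (\<alpha> * u) + c0 * \<alpha> ^ 3"
      by (simp add: algebra_simps power2_eq_square power3_eq_cube)
    have e3: "(\<alpha> ^ 2 + 1) ^ 3 + \<alpha> * (\<alpha> ^ 2 + 1) ^ 2 + c1 * \<alpha> ^ 2 * (\<alpha> ^ 2 + 1) + c0 * \<alpha> ^ 3
        = poly [:1, 1, c1 + 1, c0, c1 + 1, 1, 1:] \<alpha> + (1 + 1) * (\<alpha> ^ 4 + \<alpha> ^ 3 + \<alpha> ^ 2)"
      by (simp add: algebra_simps power2_eq_square power3_eq_cube power4_eq_xxxx)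
    have Pa': "poly [:1, 1, c1 + 1, c0, c1 + 1, 1, 1:] \<alpha> = 0" using Pa by (simp only: PL)
    have "\<alpha> ^ 3 * ((u + s) * (u + sq) * (u + sq2)) = \<alpha> ^ 3 * (u ^ 3 + u ^ 2 + c1 * u + c0)"
      unfolding e1 trs' by simp
    also have "\<dots> = (\<alpha> ^ 2 + 1) ^ 3 + \<alpha> * (\<alpha> ^ 2 + 1) ^ 2 + c1 * \<alpha> ^ 2 * (\<alpha> ^ 2 + 1) + c0 * \<alpha> ^ 3"
      unfolding e2 hv ..
    also have "\<dots> = 0" unfolding e3 Pa' c2 by simp
    finally have "\<alpha> ^ 3 * ((u + s) * (u + sq) * (u + sq2)) = 0" .
    then have "(u + s) * (u + sq) * (u + sq2) = 0" using a0 by simp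
    then have "u + s = 0 \<or> u + sq = 0 \<or> u + sq2 = 0" by auto
    moreover have "x + y = 0 \<Longrightarrow> x = y" for x y :: "'a alg_closure"
    proof -
      assume "x + y = 0"
      then have "x = - y" by (simp add: eq_neg_iff_add_eq_0)
      then show "x = y" using c2_minus[OF c2, of y] by simp
    qed
    ultimately have "u = s \<or> u = sq \<or> u = sq2" by blast
    then have "\<exists>n<3. u = s ^ (2 ^ (d * n))"
    proof (elim disjE)
      assume "u = s" then show ?thesis by (intro exI[of _ 0]) simp
    next
      assume "u = sq" then show ?thesis by (intro exI[of _ 1]) (simp add: sq_def)
    next
      assume "u = sq2" then show ?thesis by (intro exI[of _ 2]) (simp add: sq2_def mult.commute)
    qed
    then obtain n where n: "n < 3" "u = s ^ (2 ^ (d * n))" by blast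
    have uK: "u ^ (2 ^ (3 * d)) = u" using K_pow[OF sK] n by simp
    have u0: "u \<noteq> 0" using n s0 by simp
    show False
    proof (cases "m = 2")
      case False
      then have "m = 1 \<or> m = 3" using m13 by auto
      then have aK: "\<alpha> ^ (2 ^ (3 * d)) = \<alpha>"
        using am pow_pow2_fix[of \<alpha> d 3] by (auto simp: mult.commute)
      have eq: "\<alpha> ^ 2 + u * \<alpha> + 1 = 0"
      proof -
        have "\<alpha> ^ 2 + u * \<alpha> + 1 = (\<alpha> ^ 2 + \<alpha> ^ 2) + (1 + 1)" using hv by (simp add: algebra_simps)
        then show ?thesis using c2_double[OF c2] by simp
      qed
      have "T2 d (tr d (1 / u)) = 0" by (rule no_quad_root[OF c2 aK uK u0 eq])
      moreover have "tr d (1 / u) = tr d (1 / s)"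
      proof -
        have "1 / u = (1 / s) ^ (2 ^ (d * n))" using n by (simp add: power_divide)
        moreover have "(1 / s) ^ (2 ^ (3 * d)) = 1 / s" using sK by (simp add: power_divide)
        ultimately show ?thesis using tr_iter[OF c2] by simp
      qed
      ultimately show False using Ts by simp
    next
      case True
      have u2: "u ^ (2 ^ (2 * d)) = u"
      proof -
        have "\<alpha> ^ (2 ^ (2 * d)) = \<alpha>" using am True by (simp add: mult.commute)
        then show ?thesis by (simp add: u_def c2_pow2_add[OF c2] power_divide)
      qed
      have uF: "u ^ (2 ^ d) = u"
      proof -
        have "u ^ (2 ^ (3 * d)) = (u ^ (2 ^ (2 * d))) ^ (2 ^ d)" by (simp add: pow_pow2 numeral_3_eq_3)
        then show ?thesis using uK u2 by simp
      qed
      have "s = u"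
      proof -
        have "s = s ^ (2 ^ (d * n + d * (3 - n)))" using sK n by (simp add: diff_mult_distrib2 mult.commute)
        also have "\<dots> = u ^ (2 ^ (d * (3 - n)))" using n by (simp add: pow_pow2)
        also have "\<dots> = u" by (rule pow_pow2_fix[OF uF])
        finally show ?thesis .
      qed
      then show False using sF uF by simp
    qed
  qed
  have "irreducible P"
  proof (rule Factorial_Ring.irreducibleI)
    show "P \<noteq> 0" by (rule P0)
    show "\<not> P dvd 1" using is_unit_iff_degree[OF P0] degP by simp
    fix a b assume ab: "P = a * b"
    show "a dvd 1 \<or> b dvd 1"
    proof (rule ccontr)
      assume nu: "\<not> (a dvd 1 \<or> b dvd 1)"
      have a0: "a \<noteq> 0" "b \<noteq> 0" using ab P0 by auto
      have "degree a \<ge> 1" "degree b \<ge> 1" using nu is_unit_iff_degree[OF a0(1)] is_unit_iff_degree[OF a0(2)] by auto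
      moreover have "degree a + degree b = 6" using ab degP a0 by (simp add: degree_mult_eq)
      moreover have "a dvd P" "b dvd P" using ab by auto
      ultimately show False using key[of a] key[of b] by linarith
    qed
  qed
  then show ?thesis unfolding P_def by blast
qed


end
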